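(* Let $1\le p<\infty$ and $n\ge 2$. Then $U(n,p) \le U(n-1,p)\cdot w(n,p)$.
   Context: Let $q = 1/p$ (with $0^q=0$). For $n\ge 1$, $U(n,p)$ denotes the maximum of $\mathrm{per}(A)=\sum_{\sigma\in S_n}\prod_{i=1}^n a_{i\sigma(i)}$ over all real $n\times n$ matrices $A$ each of whose rows has $\ell_p$-norm equal to $1$. For $k\ge1$ let $\Delta_k=\{y\in\mathbb R^k: y_i\ge 0,\ \sum_i y_i=1\}$, and define $P_k(y) = \sum_{i=1}^k y_i^q \prod_{j\ne i}(1-y_j)^q$ for $y\in\Delta_k$. Then $w(k,p)=\max_{y\in\Delta_k} P_k(y)$. *)

theory Defs
  imports "HOL-Analysis.Analysis" "HOL-Combinatorics.Permutations"
begin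

text \<open>An n x n real matrix is represented as a function A :: nat => nat => real,
  with only the entries A i j for i, j < n being relevant.\<close>

definition per :: "nat \<Rightarrow> (nat \<Rightarrow> nat \<Rightarrow> real) \<Rightarrow> real" where
  "per n A = (\<Sum>\<sigma>\<in>{\<sigma>. \<sigma> permutes {..<n}}. \<Prod>i<n. A i (\<sigma> i))"

definition row_pnorm :: "real \<Rightarrow> nat \<Rightarrow> (nat \<Rightarrow> nat \<Rightarrow> real) \<Rightarrow> nat \<Rightarrow> real" where
  "row_pnorm p n A i = (\<Sum>j<n. \<bar>A i j\<bar> powr p) powr (1 / p)"

definition U :: "nat \<Rightarrow> real \<Rightarrow> real" where
  "U n p = (SUP A\<in>{A. \<forall>i<n. row_pnorm p n A i = 1}. per n A)"

definition std_simplex :: "nat \<Rightarrow> (nat \<Rightarrow> real) set" where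
  "std_simplex k = {y. (\<forall>i<k. y i \<ge> 0) \<and> (\<Sum>i<k. y i) = 1}"

text \<open>P_k(y) with q = 1/p; note 0 powr q = 0 as required.\<close>
definition Pk :: "nat \<Rightarrow> real \<Rightarrow> (nat \<Rightarrow> real) \<Rightarrow> real" where
  "Pk k p y = (\<Sum>i<k. y i powr (1 / p) * (\<Prod>j\<in>{..<k} - {i}. (1 - y j) powr (1 / p)))"

definition w :: "nat \<Rightarrow> real \<Rightarrow> real" where
  "w k p = (SUP y\<in>std_simplex k. Pk k p y)"

end

theory Submission
  imports Defs
begin


lemma Pk_update:
  assumes "m < n"
  shows "Pk n p (y(m:=t)) = t powr (1/p) * (\<Prod>j\<in>{..<n}-{m}. (1 - y j) powr (1/p))
     + (1 - t) powr (1/p) * (\<Sum>i\<in>{..<n}-{m}. y i powr (1/p) * (\<Prod>j\<in>{..<n}-{i}-{m}. (1 - y j) powr (1/p)))"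
proof -
  let ?z = "y(m:=t)"
  have m: "m \<in> {..<n}" using assms by simp
  have "Pk n p ?z = ?z m powr (1/p) * (\<Prod>j\<in>{..<n}-{m}. (1 - ?z j) powr (1/p))
     + (\<Sum>i\<in>{..<n}-{m}. ?z i powr (1/p) * (\<Prod>j\<in>{..<n}-{i}. (1 - ?z j) powr (1/p)))"
    unfolding Pk_def by (rule sum.remove[OF finite_lessThan m])
  also have "(\<Prod>j\<in>{..<n}-{m}. (1 - ?z j) powr (1/p)) = (\<Prod>j\<in>{..<n}-{m}. (1 - y j) powr (1/p))"
    by (rule prod.cong) auto
  also have "(\<Sum>i\<in>{..<n}-{m}. ?z i powr (1/p) * (\<Prod>j\<in>{..<n}-{i}. (1 - ?z j) powr (1/p)))
      = (\<Sum>i\<in>{..<n}-{m}. (1 - t) powr (1/p) * (y i powr (1/p) * (\<Prod>j\<in>{..<n}-{i}-{m}. (1 - y j) powr (1/p))))"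
  proof (rule sum.cong)
    fix i assume i: "i \<in> {..<n}-{m}"
    have mi: "m \<in> {..<n}-{i}" using i m by auto
    have "(\<Prod>j\<in>{..<n}-{i}. (1 - ?z j) powr (1/p)) = (1 - ?z m) powr (1/p) * (\<Prod>j\<in>{..<n}-{i}-{m}. (1 - ?z j) powr (1/p))"
      by (rule prod.remove[OF _ mi]) simp
    also have "(\<Prod>j\<in>{..<n}-{i}-{m}. (1 - ?z j) powr (1/p)) = (\<Prod>j\<in>{..<n}-{i}-{m}. (1 - y j) powr (1/p))"
      by (rule prod.cong) auto
    finally show "?z i powr (1/p) * (\<Prod>j\<in>{..<n}-{i}. (1 - ?z j) powr (1/p)) = (1 - t) powr (1/p) * (y i powr (1/p) * (\<Prod>j\<in>{..<n}-{i}-{m}. (1 - y j) powr (1/p)))"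
      using i by simp
  qed simp
  finally show ?thesis by (simp add: sum_distrib_left fun_upd_def)
qed


lemma Pk_bounds:
  assumes "p > 0" "\<forall>i<n. 0 \<le> y i \<and> y i \<le> 1"
  shows "0 \<le> Pk n p y \<and> Pk n p y \<le> n"
proof -
  have t: "0 \<le> y i powr (1/p) * (\<Prod>j\<in>{..<n}-{i}. (1 - y j) powr (1/p)) \<and>
        y i powr (1/p) * (\<Prod>j\<in>{..<n}-{i}. (1 - y j) powr (1/p)) \<le> 1" if "i < n" for i
  proof -
    have a: "y i powr (1/p) \<le> 1" using assms that by (intro powr_le1) auto
    have b: "(\<Prod>j\<in>{..<n}-{i}. (1 - y j) powr (1/p)) \<le> 1"
      using assms by (intro prod_le_1) (auto intro!: powr_le1)
    have c: "0 \<le> (\<Prod>j\<in>{..<n}-{i}. (1 - y j) powr (1/p))" by (intro prod_nonneg) auto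
    show ?thesis using a b c by (simp add: mult_le_one)
  qed
  have "Pk n p y \<le> (\<Sum>i<n. 1)" unfolding Pk_def using t by (intro sum_mono) auto
  moreover have "0 \<le> Pk n p y" unfolding Pk_def using t by (intro sum_nonneg) auto
  ultimately show ?thesis by simp
qed

lemma simplex_le1: "y \<in> std_simplex n \<Longrightarrow> i < n \<Longrightarrow> 0 \<le> y i \<and> y i \<le> 1"
proof -
  assume y: "y \<in> std_simplex n" and i: "i < n"
  have nn: "\<forall>j<n. 0 \<le> y j" and s: "(\<Sum>j<n. y j) = 1" using y unfolding std_simplex_def by auto
  have "y i \<le> (\<Sum>j<n. y j)"
    by (rule member_le_sum) (use nn i in auto)
  then show ?thesis using s nn i by auto
qed

lemma w_bdd: "p > 0 \<Longrightarrow> bdd_above (Pk n p ` std_simplex n)"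
  by (rule bdd_aboveI[of _ "real n"]) (use Pk_bounds simplex_le1 in blast)

lemma Pk_e0: "n \<ge> 1 \<Longrightarrow> Pk n p ((\<lambda>i. 0)(0 := 1)) = 1"
  by (subst Pk_update) auto

lemma e0_simplex: "n \<ge> 1 \<Longrightarrow> (\<lambda>i. 0)(0 := 1) \<in> std_simplex n"
  unfolding std_simplex_def by (auto simp: sum.remove[of "{..<n}" 0] fun_upd_def)

lemma w_ge1: "p > 0 \<Longrightarrow> n \<ge> 1 \<Longrightarrow> 1 \<le> w n p"
  unfolding w_def using cSUP_upper[OF e0_simplex w_bdd] Pk_e0 by metis

lemma Pk_restrict: "Pk n p y = Pk n p (\<lambda>i. if i < n then y i else 0)"
  unfolding Pk_def by (intro sum.cong refl arg_cong2[where f="(*)"] prod.cong) auto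


lemma Pk_le_w:
  assumes p: "1 \<le> p" and n: "1 \<le> n" and y: "\<forall>i<n. 0 \<le> y i \<and> y i \<le> 1"
  shows "Pk n p y \<le> w n p"
proof -
  define q where "q = 1/p"
  have q: "0 < q" "q \<le> 1" using p unfolding q_def by auto
  have p0: "p > 0" using p by simp
  define S where "S = (\<lambda>i. if i < n then {0..1::real} else {0})"
  define K where "K = PiE UNIV S"
  have Kc: "compact K"
    unfolding K_def using compactin_PiE[of "\<lambda>i. euclidean" UNIV S]
    by (simp add: euclidean_product_topology S_def)
  have K: "z \<in> K \<longleftrightarrow> (\<forall>i. z i \<in> S i)" for z by (simp add: K_def PiE_iff)
  have K01: "0 \<le> z i \<and> z i \<le> 1" if "z \<in> K" for z i
  proof -
    have "z i \<in> S i" using that unfolding K by simp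
    then show ?thesis unfolding S_def by (auto split: if_splits)
  qed
  have c1: "continuous_on K (\<lambda>z. z i)" for i
    by (rule continuous_on_subset[OF continuous_on_product_coordinates]) simp
  have c2: "continuous_on K (\<lambda>z. z i powr q)" for i
    by (rule continuous_on_powr'[OF c1 continuous_on_const]) (use K01 q in auto)
  have c3: "continuous_on K (\<lambda>z. (1 - z i) powr q)" for i
    by (rule continuous_on_powr'[OF continuous_on_diff[OF continuous_on_const c1] continuous_on_const])
      (use K01 q in auto)
  have cont: "continuous_on K (Pk n p)"
    unfolding Pk_def q_def[symmetric]
    by (intro continuous_on_sum continuous_on_mult continuous_on_prod c2 c3)
  have e0K: "(\<lambda>i. 0)(0:=1) \<in> K" unfolding K S_def using n by auto
  then have Kne: "K \<noteq> {}" by auto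
  obtain ys where ys: "ys \<in> K" "\<forall>z\<in>K. Pk n p z \<le> Pk n p ys"
    using continuous_attains_sup[OF Kc Kne cont] by blast
  have ys01: "0 \<le> ys i \<and> ys i \<le> 1" for i using K01[OF ys(1)] .
  have "(\<lambda>i. if i < n then y i else 0) \<in> K" unfolding K S_def using y by auto
  then have le: "Pk n p y \<le> Pk n p ys" using ys(2) Pk_restrict by metis
  have P1: "1 \<le> Pk n p ys" using Pk_e0[OF n] ys(2) e0K by metis
  have "Pk n p ys \<le> w n p"
  proof (cases "\<exists>k<n. ys k = 1")
    case True
    then obtain k where k: "k < n" "ys k = 1" by blast
    have "Pk n p ys = Pk n p (ys(k:=1))" using k by (simp add: fun_upd_idem)
    also have "\<dots> = (\<Prod>j\<in>{..<n}-{k}. (1 - ys j) powr (1/p))"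
      using Pk_update[OF k(1), of p ys 1] by simp
    also have "\<dots> \<le> 1" using ys01 p0 by (intro prod_le_1) (auto intro!: powr_le1)
    also have "\<dots> \<le> w n p" using w_ge1[OF p0 n] .
    finally show ?thesis .
  next
    case False
    then have lt1: "\<forall>k<n. ys k < 1" using ys01 by (metis order_less_le)
    let ?P = "Pk n p ys"
    have key: "ys m * ?P = ys m powr q * (\<Prod>j\<in>{..<n}-{m}. (1 - ys j) powr q)" if m: "m < n" for m
    proof (cases "ys m = 0")
      case True then show ?thesis by simp
    next
      case False
      define a where "a = ys m"
      have t: "0 < a" "a < 1" using False ys01[of m] lt1 m unfolding a_def by auto
      define C where "C = (\<Prod>j\<in>{..<n}-{m}. (1 - ys j) powr q)"
      define B where "B = (\<Sum>i\<in>{..<n}-{m}. ys i powr q * (\<Prod>j\<in>{..<n}-{i}-{m}. (1 - ys j) powr q))"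
      define h where "h t = t powr q * C + (1-t) powr q * B" for t
      have hP: "h t = Pk n p (ys(m:=t))" for t
        unfolding h_def C_def B_def q_def using Pk_update[OF m] by simp
      have hys: "h a = ?P" using hP[of a] unfolding a_def by simp
      have der: "(h has_real_derivative (q * a powr (q-1) * C - q * (1 - a) powr (q-1) * B)) (at a)"
        unfolding h_def using t by (auto intro!: derivative_eq_intros)
      have "q * a powr (q-1) * C - q * (1 - a) powr (q-1) * B = 0"
      proof (rule DERIV_local_max[OF der, of "min a (1 - a)"])
        show "0 < min a (1 - a)" using t by simp
        show "\<forall>u. \<bar>a - u\<bar> < min a (1 - a) \<longrightarrow> h u \<le> h a"
        proof (intro allI impI)
          fix u assume "\<bar>a - u\<bar> < min a (1 - a)"
          then have u: "0 < u" "u < 1" by auto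
          have "ys(m:=u) \<in> K" unfolding K
          proof
            fix i show "(ys(m:=u)) i \<in> S i"
            proof (cases "i = m")
              case True then show ?thesis using u m by (simp add: S_def)
            next
              case False then show ?thesis using ys(1) unfolding K by simp
            qed
          qed
          then show "h u \<le> h a" using ys(2) hP hys by metis
        qed
      qed
      then have st: "a powr (q-1) * C = (1 - a) powr (q-1) * B" using q(1) by (simp add: algebra_simps)
      have e1: "a powr q = a * a powr (q-1)" using t by (simp add: powr_mult_base)
      have e2: "(1-a) powr q = (1-a) * (1-a) powr (q-1)" using t by (simp add: powr_mult_base)
      have "a * h a = a * a powr q * C + a * ((1-a) * ((1-a) powr (q-1) * B))"
        unfolding h_def e2 by (simp add: algebra_simps)
      also have "\<dots> = a * a powr q * C + (1-a) * (a * a powr (q-1) * C)"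
        unfolding st[symmetric] by (simp add: algebra_simps)
      also have "\<dots> = a powr q * C" unfolding e1[symmetric] by (simp add: algebra_simps)
      finally show ?thesis using hys unfolding a_def C_def by simp
    qed
    have "?P * (\<Sum>m<n. ys m) = (\<Sum>m<n. ys m * ?P)" by (simp add: sum_distrib_left mult.commute)
    also have "\<dots> = ?P" using key unfolding Pk_def q_def by simp
    finally have "(\<Sum>m<n. ys m) = 1" using P1 by simp
    then have "ys \<in> std_simplex n" unfolding std_simplex_def using ys01 by auto
    then show "?P \<le> w n p" unfolding w_def by (rule cSUP_upper[OF _ w_bdd[OF p0]])
  qed
  with le show ?thesis by simp
qed



lemma per_transpose: "per n A = (\<Sum>\<sigma>\<in>{\<sigma>. \<sigma> permutes {..<n}}. \<Prod>i<n. A (\<sigma> i) i)"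
proof -
  have "(\<Sum>\<sigma>\<in>{\<sigma>. \<sigma> permutes {..<n}}. \<Prod>i<n. A (\<sigma> i) i)
      = (\<Sum>\<sigma>\<in>{\<sigma>. \<sigma> permutes {..<n}}. \<Prod>i<n. A i (inv \<sigma> i))"
    by (rule sum.cong[OF refl]) (rule prod.permutes_inv, simp)
  also have "\<dots> = per n A"
    unfolding per_def by (rule sum_permutations_inverse[symmetric])
  finally show ?thesis by simp
qed

lemma per_expand:
  "per (Suc m) A = (\<Sum>b<Suc m. A b m * per m (\<lambda>l j. A (Transposition.transpose m b l) j))"
proof -
  have fin: "finite {..<m}" and nin: "m \<notin> {..<m}" by auto
  have "per (Suc m) A = (\<Sum>\<sigma>\<in>{\<sigma>. \<sigma> permutes insert m {..<m}}. \<Prod>i\<in>insert m {..<m}. A (\<sigma> i) i)"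
    unfolding per_transpose lessThan_Suc by simp
  also have "\<dots> = (\<Sum>b\<in>insert m {..<m}. \<Sum>\<tau>\<in>{\<tau>. \<tau> permutes {..<m}}.
         \<Prod>i\<in>insert m {..<m}. A ((Transposition.transpose m b \<circ> \<tau>) i) i)"
    by (rule sum_over_permutations_insert[OF fin nin])
  also have "\<dots> = (\<Sum>b\<in>insert m {..<m}. A b m * per m (\<lambda>l j. A (Transposition.transpose m b l) j))"
  proof (rule sum.cong[OF refl])
    fix b assume b: "b \<in> insert m {..<m}"
    have "(\<Sum>\<tau>\<in>{\<tau>. \<tau> permutes {..<m}}. \<Prod>i\<in>insert m {..<m}. A ((Transposition.transpose m b \<circ> \<tau>) i) i)
        = (\<Sum>\<tau>\<in>{\<tau>. \<tau> permutes {..<m}}. A b m * (\<Prod>i<m. A (Transposition.transpose m b (\<tau> i)) i))"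
    proof (rule sum.cong[OF refl])
      fix \<tau> assume "\<tau> \<in> {\<tau>. \<tau> permutes {..<m}}"
      then have t: "\<tau> permutes {..<m}" by simp
      have "\<tau> m = m" using permutes_not_in[OF t nin] .
      then show "(\<Prod>i\<in>insert m {..<m}. A ((Transposition.transpose m b \<circ> \<tau>) i) i) = A b m * (\<Prod>i<m. A (Transposition.transpose m b (\<tau> i)) i)"
        using fin nin by simp
    qed
    also have "\<dots> = A b m * per m (\<lambda>l j. A (Transposition.transpose m b l) j)"
      unfolding per_transpose[of m] by (simp add: sum_distrib_left)
    finally show "(\<Sum>\<tau>\<in>{\<tau>. \<tau> permutes {..<m}}. \<Prod>i\<in>insert m {..<m}. A ((Transposition.transpose m b \<circ> \<tau>) i) i)
        = A b m * per m (\<lambda>l j. A (Transposition.transpose m b l) j)" .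
  qed
  finally show ?thesis unfolding lessThan_Suc .
qed

lemma per_scale: "per m (\<lambda>i j. c i * A i j) = (\<Prod>i<m. c i) * per m A"
  unfolding per_def by (simp add: prod.distrib sum_distrib_left)

lemma row_sum_one:
  assumes "p > 0" "row_pnorm p m A i = 1"
  shows "(\<Sum>j<m. \<bar>A i j\<bar> powr p) = 1"
proof -
  let ?S = "(\<Sum>j<m. \<bar>A i j\<bar> powr p)"
  have "?S \<ge> 0" by (intro sum_nonneg) auto
  moreover have "?S powr (1/p) = 1" using assms unfolding row_pnorm_def by simp
  ultimately have "(?S powr (1/p)) powr p = 1" by simp
  then show ?thesis using \<open>?S \<ge> 0\<close> assms(1) by (simp add: powr_powr)
qed

lemma entry_le1:
  assumes "p > 0" "row_pnorm p m A i = 1" "j < m"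
  shows "\<bar>A i j\<bar> \<le> 1"
proof -
  have "\<bar>A i j\<bar> powr p \<le> (\<Sum>j<m. \<bar>A i j\<bar> powr p)"
    by (rule member_le_sum) (use assms in auto)
  then have "\<bar>A i j\<bar> powr p \<le> 1" using row_sum_one[OF assms(1,2)] by simp
  show ?thesis
  proof (rule ccontr)
    assume "\<not> \<bar>A i j\<bar> \<le> 1"
    then have "1 < \<bar>A i j\<bar>" by simp
    then have "1 powr p < \<bar>A i j\<bar> powr p" by (intro powr_less_mono2) (use assms(1) in auto)
    then show False using \<open>\<bar>A i j\<bar> powr p \<le> 1\<close> by simp
  qed
qed

lemma per_le_fact:
  assumes "p > 0" "\<forall>i<m. row_pnorm p m A i = 1"
  shows "per m A \<le> fact m"
proof -
  have "per m A \<le> (\<Sum>\<sigma>\<in>{\<sigma>. \<sigma> permutes {..<m}}. 1)"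
    unfolding per_def
  proof (rule sum_mono)
    fix \<sigma> assume "\<sigma> \<in> {\<sigma>. \<sigma> permutes {..<m}}"
    then have s: "\<sigma> permutes {..<m}" by simp
    have "\<bar>\<Prod>i<m. A i (\<sigma> i)\<bar> \<le> 1"
      unfolding abs_prod
      by (intro prod_le_1) (use assms entry_le1 permutes_in_image[OF s] in auto)
    then show "(\<Prod>i<m. A i (\<sigma> i)) \<le> 1" by simp
  qed
  also have "\<dots> = fact m" using card_permutations[of "{..<m}" m] by simp
  finally show ?thesis .
qed

lemma U_bdd: "p > 0 \<Longrightarrow> bdd_above (per m ` {A. \<forall>i<m. row_pnorm p m A i = 1})"
  by (rule bdd_aboveI[of _ "fact m"]) (use per_le_fact in blast)

lemma U_upper: "p > 0 \<Longrightarrow> \<forall>i<m. row_pnorm p m A i = 1 \<Longrightarrow> per m A \<le> U m p"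
  unfolding U_def by (rule cSUP_upper[OF _ U_bdd]) auto

lemma const_mat:
  assumes "p > 0" "m \<ge> 1"
  shows "\<forall>i<m. row_pnorm p m (\<lambda>i j. (1 / real m) powr (1/p)) i = 1"
    and "per m (\<lambda>i j. (1 / real m) powr (1/p)) \<ge> 0"
proof -
  have "((1 / real m) powr (1/p)) powr p = 1 / real m" using assms by (simp add: powr_powr)
  then have "(\<Sum>j<m. \<bar>(1 / real m) powr (1/p)\<bar> powr p) = 1" using assms by simp
  then show "\<forall>i<m. row_pnorm p m (\<lambda>i j. (1 / real m) powr (1/p)) i = 1"
    unfolding row_pnorm_def by simp
  show "per m (\<lambda>i j. (1 / real m) powr (1/p)) \<ge> 0"
    unfolding per_def by (intro sum_nonneg prod_nonneg) auto
qed

lemma U_nonneg: "p > 0 \<Longrightarrow> m \<ge> 1 \<Longrightarrow> 0 \<le> U m p"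
  using const_mat U_upper by (meson order_trans)


lemma row_pnorm_nonneg: "0 \<le> row_pnorm p m D i"
  unfolding row_pnorm_def by simp

lemma per_abs_bound:
  assumes p: "p > 0" and m: "m \<ge> 1"
  shows "\<bar>per m D\<bar> \<le> U m p * (\<Prod>l<m. row_pnorm p m D l)"
proof (cases "\<exists>l<m. row_pnorm p m D l = 0")
  case True
  then obtain l where l: "l < m" "row_pnorm p m D l = 0" by blast
  have S0: "(\<Sum>j<m. \<bar>D l j\<bar> powr p) = 0" using l(2) unfolding row_pnorm_def by simp
  have z: "D l j = 0" if "j < m" for j
  proof -
    have "\<forall>j\<in>{..<m}. \<bar>D l j\<bar> powr p = 0"
      using S0 sum_nonneg_eq_0_iff[of "{..<m}" "\<lambda>j. \<bar>D l j\<bar> powr p"] by simp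
    then show ?thesis using that by simp
  qed
  have P0: "per m D = 0" unfolding per_def
  proof (rule sum.neutral, intro ballI)
    fix \<sigma> assume "\<sigma> \<in> {\<sigma>. \<sigma> permutes {..<m}}"
    then have s: "\<sigma> permutes {..<m}" by simp
    have "\<sigma> l < m" using permutes_in_image[OF s] l(1) by simp
    then have "D l (\<sigma> l) = 0" using z by simp
    then show "(\<Prod>i<m. D i (\<sigma> i)) = 0" using l(1) by (intro prod_zero) auto
  qed
  have Q0: "(\<Prod>l<m. row_pnorm p m D l) = 0" using l by (intro prod_zero) auto
  show ?thesis unfolding P0 Q0 by simp
next
  case False
  define r where "r = row_pnorm p m D"
  have rpos: "r i > 0" if "i < m" for i
    using False that row_pnorm_nonneg[of p m D i] unfolding r_def by force
  define E where "E = (\<lambda>i j. D i j / r i)"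
  have Eunit: "row_pnorm p m E i = 1" if i: "i < m" for i
  proof -
    let ?S = "(\<Sum>j<m. \<bar>D i j\<bar> powr p)"
    have S: "?S \<ge> 0" by (intro sum_nonneg) auto
    have "row_pnorm p m E i = (\<Sum>j<m. \<bar>D i j\<bar> powr p / r i powr p) powr (1/p)"
      unfolding row_pnorm_def E_def using rpos[OF i]
      by (simp add: abs_divide powr_divide)
    also have "\<dots> = (?S / r i powr p) powr (1/p)" by (simp add: sum_divide_distrib)
    also have "\<dots> = ?S powr (1/p) / (r i powr p) powr (1/p)"
      using S rpos[OF i] by (simp add: powr_divide)
    also have "\<dots> = r i / r i" using rpos[OF i] p S unfolding r_def row_pnorm_def by (simp add: powr_powr)
    also have "\<dots> = 1" using rpos[OF i] by simp
    finally show ?thesis .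
  qed
  have DE: "per m D = (\<Prod>i<m. r i) * per m E"
  proof -
    have "per m D = per m (\<lambda>i j. r i * E i j)"
      unfolding per_def E_def
    proof (intro sum.cong prod.cong refl)
      fix \<sigma> i assume "i \<in> {..<m}"
      then have "r i \<noteq> 0" using rpos by force
      then show "D i (\<sigma> i) = r i * (D i (\<sigma> i) / r i)" by simp
    qed
    then show ?thesis by (simp add: per_scale)
  qed
  have E1: "per m E \<le> U m p" using U_upper[OF p] Eunit by blast
  define c where "c = (\<lambda>i::nat. if i = 0 then -1 else (1::real))"
  define F where "F = (\<lambda>i j. c i * E i j)"
  have "(\<Prod>i<m. c i) = c 0 * (\<Prod>i\<in>{..<m}-{0}. c i)"
    using m by (intro prod.remove) auto
  also have "\<dots> = -1" unfolding c_def by simp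
  finally have cprod: "(\<Prod>i<m. c i) = -1" .
  have Funit: "row_pnorm p m F i = 1" if "i < m" for i
  proof -
    have "row_pnorm p m F i = row_pnorm p m E i"
      unfolding row_pnorm_def F_def c_def by (simp add: abs_mult)
    then show ?thesis using Eunit that by simp
  qed
  have "per m F = - per m E" unfolding F_def per_scale cprod by simp
  moreover have "per m F \<le> U m p" using U_upper[OF p] Funit by blast
  ultimately have E2: "- per m E \<le> U m p" by simp
  have rp: "0 \<le> (\<Prod>i<m. r i)" using rpos by (intro prod_nonneg) (auto simp: less_imp_le)
  have "\<bar>per m D\<bar> = (\<Prod>i<m. r i) * \<bar>per m E\<bar>" using DE rp by (simp add: abs_mult)
  also have "\<dots> \<le> (\<Prod>i<m. r i) * U m p" using E1 E2 rp by (intro mult_left_mono) auto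
  finally show ?thesis unfolding r_def by (simp add: mult.commute)
qed



lemma per_bound_main:
  assumes p: "1 \<le> p" and m: "1 \<le> m" and A: "\<forall>i<Suc m. row_pnorm p (Suc m) A i = 1"
  shows "per (Suc m) A \<le> U m p * w (Suc m) p"
proof -
  let ?n = "Suc m"
  let ?t = "\<lambda>b. Transposition.transpose m b"
  have p0: "p > 0" using p by simp
  define y where "y = (\<lambda>k. \<bar>A k m\<bar> powr p)"
  have rs: "(\<Sum>j<?n. \<bar>A k j\<bar> powr p) = 1" if "k < ?n" for k
    using row_sum_one[OF p0] A that by blast
  have y01: "\<forall>k<?n. 0 \<le> y k \<and> y k \<le> 1"
  proof (intro allI impI conjI)
    fix k assume k: "k < ?n"
    show "0 \<le> y k" unfolding y_def by simp
    have "y k \<le> (\<Sum>j<?n. \<bar>A k j\<bar> powr p)" unfolding y_def by (rule member_le_sum) auto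
    then show "y k \<le> 1" using rs[OF k] by simp
  qed
  have tperm: "?t b permutes {..<?n}" if "b < ?n" for b
    using that by (intro permutes_swap_id) auto
  have rowD: "row_pnorm p m (\<lambda>l j. A (?t b l) j) l = (1 - y (?t b l)) powr (1/p)"
    if b: "b < ?n" and l: "l < m" for b l
  proof -
    have k: "?t b l < ?n" using permutes_in_image[OF tperm[OF b]] l by simp
    have "(\<Sum>j<?n. \<bar>A (?t b l) j\<bar> powr p) = (\<Sum>j<m. \<bar>A (?t b l) j\<bar> powr p) + y (?t b l)"
      unfolding y_def by simp
    then have "(\<Sum>j<m. \<bar>A (?t b l) j\<bar> powr p) = 1 - y (?t b l)" using rs[OF k] by simp
    then show ?thesis unfolding row_pnorm_def by simp
  qed
  have prodD: "(\<Prod>l<m. (1 - y (?t b l)) powr (1/p)) = (\<Prod>k\<in>{..<?n}-{b}. (1 - y k) powr (1/p))"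
    if b: "b < ?n" for b
  proof -
    have "bij_betw (?t b) ({..<?n} - {m}) ({..<?n} - {b})"
    proof (rule bij_betw_DiffI)
      show "bij_betw (?t b) {..<?n} {..<?n}" using permutes_imp_bij[OF tperm[OF b]] .
      show "bij_betw (?t b) {m} {b}" by (simp add: bij_betw_def)
    qed (use b in auto)
    moreover have "{..<?n} - {m} = {..<m}" by auto
    ultimately have "bij_betw (?t b) {..<m} ({..<?n} - {b})" by simp
    then show ?thesis by (rule prod.reindex_bij_betw)
  qed
  have absA: "\<bar>A b m\<bar> = y b powr (1/p)" for b
    unfolding y_def using p0 by (simp add: powr_powr)
  have "per ?n A = (\<Sum>b<?n. A b m * per m (\<lambda>l j. A (?t b l) j))"
    by (rule per_expand)
  also have "\<dots> \<le> (\<Sum>b<?n. \<bar>A b m\<bar> * \<bar>per m (\<lambda>l j. A (?t b l) j)\<bar>)"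
    by (intro sum_mono) (metis abs_ge_self abs_mult)
  also have "\<dots> \<le> (\<Sum>b<?n. \<bar>A b m\<bar> * (U m p * (\<Prod>l<m. row_pnorm p m (\<lambda>l j. A (?t b l) j) l)))"
    by (intro sum_mono mult_left_mono per_abs_bound[OF p0 m]) auto
  also have "\<dots> = U m p * (\<Sum>b<?n. y b powr (1/p) * (\<Prod>k\<in>{..<?n}-{b}. (1 - y k) powr (1/p)))"
    unfolding sum_distrib_left
  proof (rule sum.cong[OF refl])
    fix b assume "b \<in> {..<?n}"
    then have b: "b < ?n" by simp
    have "(\<Prod>l<m. row_pnorm p m (\<lambda>l j. A (?t b l) j) l) = (\<Prod>l<m. (1 - y (?t b l)) powr (1/p))"
      using rowD[OF b] by (intro prod.cong) auto
    then show "\<bar>A b m\<bar> * (U m p * (\<Prod>l<m. row_pnorm p m (\<lambda>l j. A (?t b l) j) l))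
       = U m p * (y b powr (1/p) * (\<Prod>k\<in>{..<?n}-{b}. (1 - y k) powr (1/p)))"
      using prodD[OF b] absA[of b] by simp
  qed
  also have "\<dots> = U m p * Pk ?n p y" unfolding Pk_def ..
  also have "\<dots> \<le> U m p * w ?n p"
    by (intro mult_left_mono Pk_le_w[OF p _ y01] U_nonneg[OF p0 m]) simp
  finally show ?thesis .
qed

theorem mainTheorem6:
  fixes n :: nat and p :: real
  assumes "1 \<le> p" and "2 \<le> n"
  shows "U n p \<le> U (n - 1) p * w n p"
proof -
  obtain m where n: "n = Suc m" using assms(2) by (cases n) auto
  have m: "1 \<le> m" using assms(2) n by simp
  have p0: "p > 0" using assms(1) by simp
  have ne: "{A. \<forall>i<n. row_pnorm p n A i = 1} \<noteq> {}"
  proof -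
    have "1 \<le> n" using n by simp
    from const_mat(1)[OF p0 this] show ?thesis by (simp add: ex_in_conv[symmetric]) blast
  qed
  have "U n p \<le> U m p * w n p"
    unfolding U_def[of n p]
  proof (rule cSUP_least[OF ne])
    fix A assume "A \<in> {A. \<forall>i<n. row_pnorm p n A i = 1}"
    then have "\<forall>i<Suc m. row_pnorm p (Suc m) A i = 1" using n by simp
    from per_bound_main[OF assms(1) m this] show "per n A \<le> U m p * w n p" using n by simp
  qed
  then show ?thesis using n by simp
qed

end
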